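(* Let $N(T)$ be a net on a grid $T$ with lines $s_i$, $t_j$. Suppose that $\|[\sigma_1,\sigma_2;\tau_1,\tau_2]N\|_\infty\le L$ holds (a) whenever $\sigma_1=s_i$, $\sigma_2=s_{i+1}$ and $\tau_1\ne\tau_2$ with $t_j\le\tau_1,\tau_2\le t_{j+1}$, for some $i,j\in\mathbb{Z}$, and (b) whenever $\tau_1=t_j$, $\tau_2=t_{j+1}$ and $\sigma_1\ne\sigma_2$ with $s_i\le\sigma_1,\sigma_2\le s_{i+1}$, for some $i,j\in\mathbb{Z}$. Then $N(T)$ has the BMSDD property with constant $L$.
   Context: For strictly increasing bi-infinite real sequences $(s_i)_{i\in\mathbb{Z}}$, $(t_j)_{j\in\mathbb{Z}}$, unbounded above and below, the grid is $T=\bigcup_i\{s_i\}\times\mathbb{R}\ \cup\ \bigcup_j\mathbb{R}\times\{t_j\}$; a net $N(T)$ is a function on $T$ with values in $\mathbb{R}^m$. For $\sigma_1\ne\sigma_2$, $\tau_1\ne\tau_2$, $[\sigma_1,\sigma_2;\tau_1,\tau_2]N=\frac{N(\sigma_1,\tau_1)+N(\sigma_2,\tau_2)-N(\sigma_2,\tau_1)-N(\sigma_1,\tau_2)}{(\sigma_1-\sigma_2)(\tau_1-\tau_2)}$. The net has the BMSDD property with constant $L$ if $\|[\sigma_1,\sigma_2;\tau_1,\tau_2]N\|_\infty\le L$ for all $\sigma_1\ne\sigma_2$, $\tau_1\ne\tau_2$ with $(\sigma_i,\tau_j)\in T$ for all $i,j\in\{1,2\}$. *)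

theory Defs
  imports "HOL-Analysis.Analysis"
begin

definition grid_seq :: "(int \<Rightarrow> real) \<Rightarrow> bool" where
  "grid_seq s \<longleftrightarrow> strict_mono s \<and> (\<forall>M. \<exists>i. s i > M) \<and> (\<forall>M. \<exists>i. s i < M)"

definition grid :: "(int \<Rightarrow> real) \<Rightarrow> (int \<Rightarrow> real) \<Rightarrow> (real \<times> real) set" where
  "grid s t = {(x, y). (\<exists>i. x = s i) \<or> (\<exists>j. y = t j)}"

definition mdd :: "(real \<times> real \<Rightarrow> real ^ 'm) \<Rightarrow> real \<Rightarrow> real \<Rightarrow> real \<Rightarrow> real \<Rightarrow> real ^ 'm" where
  "mdd N s1 s2 t1 t2 =
     (1 / ((s1 - s2) * (t1 - t2))) *\<^sub>R (N (s1, t1) + N (s2, t2) - N (s2, t1) - N (s1, t2))"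

definition bmsdd :: "(int \<Rightarrow> real) \<Rightarrow> (int \<Rightarrow> real) \<Rightarrow> (real \<times> real \<Rightarrow> real ^ 'm) \<Rightarrow> real \<Rightarrow> bool" where
  "bmsdd s t N L \<longleftrightarrow>
     (\<forall>s1 s2 t1 t2. s1 \<noteq> s2 \<and> t1 \<noteq> t2 \<and>
        (s1, t1) \<in> grid s t \<and> (s1, t2) \<in> grid s t \<and> (s2, t1) \<in> grid s t \<and> (s2, t2) \<in> grid s t
        \<longrightarrow> infnorm (mdd N s1 s2 t1 t2) \<le> L)"

end

theory Submission
  imports Defs
begin

lemma cell_exists:
  assumes "grid_seq t"
  shows "\<exists>j. t j \<le> x \<and> x < t (j + 1)"
proof -
  from assms obtain i0 where i0: "t i0 < x" unfolding grid_seq_def by blast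
  from assms obtain i1 where i1: "t i1 > x" unfolding grid_seq_def by blast
  have sm: "strict_mono t" using assms unfolding grid_seq_def by blast
  have le: "i0 \<le> i1"
  proof (rule ccontr)
    assume "\<not> i0 \<le> i1" then have "i1 < i0" by simp
    then have "t i1 < t i0" using sm by (simp add: strict_mono_less)
    then show False using i0 i1 by simp
  qed
  have "\<forall>n::nat. t (i0 + int n) > x \<longrightarrow> (\<exists>j. t j \<le> x \<and> x < t (j + 1))"
  proof
    fix n :: nat
    show "t (i0 + int n) > x \<longrightarrow> (\<exists>j. t j \<le> x \<and> x < t (j + 1))"
    proof (induction n)
      case 0 then show ?case using i0 by simp
    next
      case (Suc n)
      show ?case
      proof (cases "t (i0 + int n) > x")
        case True then show ?thesis using Suc by simp
      next
        case False then show ?thesis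
          by (metis add.assoc not_less of_nat_Suc add.commute)
      qed
    qed
  qed
  moreover have "i0 + int (nat (i1 - i0)) = i1" using le by simp
  ultimately show ?thesis using i1 by metis
qed

lemma oned:
  fixes t :: "int \<Rightarrow> real" and F :: "real \<Rightarrow> real \<Rightarrow> real ^ 'm"
  assumes gs: "grid_seq t" and add: "\<And>a b c. F a c = F a b + F b c"
    and bnd: "\<And>j a b. t j \<le> a \<Longrightarrow> a \<le> b \<Longrightarrow> b \<le> t (j + 1) \<Longrightarrow> infnorm (F a b) \<le> K * (b - a)"
    and ab: "a \<le> b"
  shows "infnorm (F a b) \<le> K * (b - a)"
proof -
  have sm: "strict_mono t" using gs unfolding grid_seq_def by blast
  have claim: "\<And>j a b. t j \<le> a \<Longrightarrow> a < t (j + 1) \<Longrightarrow> a \<le> b \<Longrightarrow> b < t (j + int n + 1) \<Longrightarrow> infnorm (F a b) \<le> K * (b - a)" for n :: nat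
  proof (induction n)
    case 0 then show ?case using bnd[of j a b] by (metis add.right_neutral less_eq_real_def of_nat_0)
  next
    case (Suc n)
    show ?case
    proof (cases "b \<le> t (j + 1)")
      case True then show ?thesis using bnd Suc.prems by blast
    next
      case False
      have aj: "a \<le> t (j + 1)" using Suc.prems(2) by simp
      have tt: "t (j+1) < t (j+1+1)" using sm by (simp add: strict_mono_less)
      have 1: "infnorm (F a (t (j+1))) \<le> K * (t (j+1) - a)"
        using bnd[of j a "t (j+1)"] Suc.prems aj by simp
      have 2: "infnorm (F (t (j+1)) b) \<le> K * (b - t (j+1))"
        using Suc.IH[of "j+1" "t (j+1)" b] Suc.prems False tt
        by (simp add: add.commute add.left_commute)
      have "infnorm (F a b) \<le> infnorm (F a (t (j+1))) + infnorm (F (t (j+1)) b)"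
        using add[of a b "t (j+1)"] infnorm_triangle by metis
      also have "\<dots> \<le> K * (b - a)" using 1 2 by (simp add: algebra_simps)
      finally show ?thesis .
    qed
  qed
  obtain j where j: "t j \<le> a" "a < t (j+1)" using cell_exists[OF gs] by blast
  obtain k where k: "t k \<le> b" "b < t (k+1)" using cell_exists[OF gs] by blast
  have "j \<le> k"
  proof (rule ccontr)
    assume "\<not> j \<le> k" then have "k + 1 \<le> j" by simp
    then have "t (k+1) \<le> t j" using sm by (simp add: strict_mono_less_eq)
    then show False using j k ab by linarith
  qed
  then have "j + int (nat (k - j)) + 1 = k + 1" by simp
  then show ?thesis using claim[of j a b "nat (k - j)"] j k ab by simp
qed


definition DD :: "(real \<times> real \<Rightarrow> real ^ 'm) \<Rightarrow> real \<Rightarrow> real \<Rightarrow> real \<Rightarrow> real \<Rightarrow> real ^ 'm" where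
  "DD N a b c d = N (a, c) + N (b, d) - N (b, c) - N (a, d)"

lemma DD_add1: "DD N a c x y = DD N a b x y + DD N b c x y"
  unfolding DD_def by (simp add: algebra_simps)
lemma DD_add2: "DD N x y a c = DD N x y a b + DD N x y b c"
  unfolding DD_def by (simp add: algebra_simps)
lemma DD_swap1: "DD N b a x y = - DD N a b x y"
  unfolding DD_def by (simp add: algebra_simps)
lemma DD_swap2: "DD N x y b a = - DD N x y a b"
  unfolding DD_def by (simp add: algebra_simps)
lemma DD_transp: "DD (\<lambda>p. N (snd p, fst p)) a b c d = DD N c d a b"
  unfolding DD_def by (simp add: algebra_simps)
lemma mdd_DD: "mdd N a b c d = (1 / ((a - b) * (c - d))) *\<^sub>R DD N a b c d"
  unfolding mdd_def DD_def by simp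
lemma infnorm_DD: "a \<noteq> b \<Longrightarrow> c \<noteq> d \<Longrightarrow>
   infnorm (DD N a b c d) = \<bar>(a - b) * (c - d)\<bar> * infnorm (mdd N a b c d)"
  unfolding mdd_DD infnorm_mul by (simp add: abs_mult)

lemma DD_abs2:
  assumes "\<And>c d. c \<le> d \<Longrightarrow> infnorm (DD N a b c d) \<le> K * (d - c)"
  shows "infnorm (DD N a b c d) \<le> K * \<bar>d - c\<bar>"
proof (cases "c \<le> d")
  case True then show ?thesis using assms by simp
next
  case False
  then have "infnorm (DD N a b d c) \<le> K * (c - d)" using assms by simp
  moreover have "infnorm (DD N a b c d) = infnorm (DD N a b d c)"
    using DD_swap2[of N a b c d] infnorm_neg by metis
  ultimately show ?thesis using False by simp
qed

lemma half:
  fixes s t :: "int \<Rightarrow> real" and N :: "real \<times> real \<Rightarrow> real ^ 'm"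
  assumes gs: "grid_seq s" and gt: "grid_seq t"
    and hyp: "\<And>i j \<tau>1 \<tau>2. \<tau>1 < \<tau>2 \<Longrightarrow> t j \<le> \<tau>1 \<Longrightarrow> \<tau>2 \<le> t (j + 1) \<Longrightarrow>
        infnorm (DD N (s i) (s (i + 1)) \<tau>1 \<tau>2) \<le> L * (s (i + 1) - s i) * (\<tau>2 - \<tau>1)"
  shows "infnorm (DD N (s i) (s k) \<tau>1 \<tau>2) \<le> L * \<bar>s k - s i\<bar> * \<bar>\<tau>2 - \<tau>1\<bar>"
proof -
  have sm: "strict_mono s" using gs unfolding grid_seq_def by blast
  have A: "infnorm (DD N (s i) (s (i + 1)) c d) \<le> L * (s (i + 1) - s i) * \<bar>d - c\<bar>" for i c d
  proof (rule DD_abs2)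
    fix c d :: real assume "c \<le> d"
    show "infnorm (DD N (s i) (s (i + 1)) c d) \<le> L * (s (i + 1) - s i) * (d - c)"
    proof (rule oned[OF gt, where F = "\<lambda>c d. DD N (s i) (s (i + 1)) c d"])
      show "\<And>a b c. DD N (s i) (s (i + 1)) a c = DD N (s i) (s (i + 1)) a b + DD N (s i) (s (i + 1)) b c"
        by (rule DD_add2)
      show "c \<le> d" by fact
      fix j a b assume h: "t j \<le> a" "a \<le> b" "b \<le> t (j + 1)"
      show "infnorm (DD N (s i) (s (i + 1)) a b) \<le> L * (s (i + 1) - s i) * (b - a)"
      proof (cases "a = b")
        case True then show ?thesis by (simp add: DD_def infnorm_0)
      next
        case False then show ?thesis using hyp[of a b j i] h by simp
      qed
    qed
  qed
  have B: "infnorm (DD N (s i) (s (i + int n)) c d) \<le> L * (s (i + int n) - s i) * \<bar>d - c\<bar>" for i c d and n :: nat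
  proof (induction n)
    case 0 then show ?case by (simp add: DD_def infnorm_0)
  next
    case (Suc n)
    have e: "i + int (Suc n) = i + int n + 1" by simp
    have "infnorm (DD N (s i) (s (i + int (Suc n))) c d)
        \<le> infnorm (DD N (s i) (s (i + int n)) c d) + infnorm (DD N (s (i + int n)) (s (i + int n + 1)) c d)"
      unfolding e using DD_add1 infnorm_triangle by metis
    also have "\<dots> \<le> L * (s (i + int n) - s i) * \<bar>d - c\<bar> + L * (s (i + int n + 1) - s (i + int n)) * \<bar>d - c\<bar>"
      using Suc.IH A[of "i + int n" c d] by linarith
    also have "\<dots> = L * (s (i + int (Suc n)) - s i) * \<bar>d - c\<bar>" unfolding e by (simp add: algebra_simps)
    finally show ?case .
  qed
  show ?thesis
  proof (cases "i \<le> k")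
    case True
    then have e: "i + int (nat (k - i)) = k" by simp
    have "s i \<le> s k" using True sm by (simp add: strict_mono_less_eq)
    then show ?thesis using B[where i=i and n="nat (k - i)" and c="\<tau>1" and d="\<tau>2"] unfolding e by simp
  next
    case False
    then have e: "k + int (nat (i - k)) = i" by simp
    have "s k \<le> s i" using False sm by (simp add: strict_mono_less_eq)
    moreover have "infnorm (DD N (s i) (s k) \<tau>1 \<tau>2) = infnorm (DD N (s k) (s i) \<tau>1 \<tau>2)"
      using DD_swap1[of N "s i" "s k" \<tau>1 \<tau>2] infnorm_neg by metis
    ultimately show ?thesis using B[where i=k and n="nat (i - k)" and c="\<tau>1" and d="\<tau>2"] unfolding e by simp
  qed
qed

theorem lemma3:
  fixes s t :: "int \<Rightarrow> real" and N :: "real \<times> real \<Rightarrow> real ^ 'm" and L :: real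
  assumes "grid_seq s" and "grid_seq t"
    and a: "\<And>i j \<tau>1 \<tau>2. \<tau>1 \<noteq> \<tau>2 \<Longrightarrow> t j \<le> \<tau>1 \<Longrightarrow> \<tau>1 \<le> t (j + 1) \<Longrightarrow>
              t j \<le> \<tau>2 \<Longrightarrow> \<tau>2 \<le> t (j + 1) \<Longrightarrow> infnorm (mdd N (s i) (s (i + 1)) \<tau>1 \<tau>2) \<le> L"
    and b: "\<And>i j \<sigma>1 \<sigma>2. \<sigma>1 \<noteq> \<sigma>2 \<Longrightarrow> s i \<le> \<sigma>1 \<Longrightarrow> \<sigma>1 \<le> s (i + 1) \<Longrightarrow>
              s i \<le> \<sigma>2 \<Longrightarrow> \<sigma>2 \<le> s (i + 1) \<Longrightarrow> infnorm (mdd N \<sigma>1 \<sigma>2 (t j) (t (j + 1))) \<le> L"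
  shows "bmsdd s t N L"
proof -
  have sms: "strict_mono s" using assms(1) unfolding grid_seq_def by blast
  have smt: "strict_mono t" using assms(2) unfolding grid_seq_def by blast
  have V: "infnorm (DD N (s i) (s k) c d) \<le> L * \<bar>s k - s i\<bar> * \<bar>d - c\<bar>" for i k c d
  proof (rule half[OF assms(1,2)])
    fix i j and \<tau>1 \<tau>2 :: real assume h: "\<tau>1 < \<tau>2" "t j \<le> \<tau>1" "\<tau>2 \<le> t (j + 1)"
    have si: "s i < s (i + 1)" using sms by (simp add: strict_mono_less)
    have "infnorm (mdd N (s i) (s (i + 1)) \<tau>1 \<tau>2) \<le> L" using a[of \<tau>1 \<tau>2 j i] h by simp
    moreover have "infnorm (DD N (s i) (s (i + 1)) \<tau>1 \<tau>2)
       = ((s (i + 1) - s i) * (\<tau>2 - \<tau>1)) * infnorm (mdd N (s i) (s (i + 1)) \<tau>1 \<tau>2)"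
      using infnorm_DD[of "s i" "s (i+1)" \<tau>1 \<tau>2 N] si h
      by (simp add: abs_mult)
    moreover have "0 \<le> (s (i + 1) - s i) * (\<tau>2 - \<tau>1)" using si h by simp
    ultimately have "infnorm (DD N (s i) (s (i + 1)) \<tau>1 \<tau>2) \<le> ((s (i + 1) - s i) * (\<tau>2 - \<tau>1)) * L"
      using mult_left_mono by simp
    then show "infnorm (DD N (s i) (s (i + 1)) \<tau>1 \<tau>2) \<le> L * (s (i + 1) - s i) * (\<tau>2 - \<tau>1)"
      by (simp add: mult_ac)
  qed
  have H: "infnorm (DD N c d (t j) (t k)) \<le> L * \<bar>t k - t j\<bar> * \<bar>d - c\<bar>" for j k c d
  proof -
    have "infnorm (DD (\<lambda>p. N (snd p, fst p)) (t j) (t k) c d) \<le> L * \<bar>t k - t j\<bar> * \<bar>d - c\<bar>"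
    proof (rule half[OF assms(2,1)])
      fix i j and \<tau>1 \<tau>2 :: real assume h: "\<tau>1 < \<tau>2" "s j \<le> \<tau>1" "\<tau>2 \<le> s (j + 1)"
      have si: "t i < t (i + 1)" using smt by (simp add: strict_mono_less)
      have "infnorm (mdd N \<tau>1 \<tau>2 (t i) (t (i + 1))) \<le> L" using b[of \<tau>1 \<tau>2 j i] h by simp
      moreover have "infnorm (DD N \<tau>1 \<tau>2 (t i) (t (i + 1)))
         = ((t (i + 1) - t i) * (\<tau>2 - \<tau>1)) * infnorm (mdd N \<tau>1 \<tau>2 (t i) (t (i + 1)))"
        using infnorm_DD[of \<tau>1 \<tau>2 "t i" "t (i+1)" N] si h
        by (simp add: abs_mult)
      moreover have "0 \<le> (t (i + 1) - t i) * (\<tau>2 - \<tau>1)" using si h by simp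
      ultimately have "infnorm (DD N \<tau>1 \<tau>2 (t i) (t (i + 1))) \<le> ((t (i + 1) - t i) * (\<tau>2 - \<tau>1)) * L"
        using mult_left_mono by simp
      then show "infnorm (DD (\<lambda>p. N (snd p, fst p)) (t i) (t (i + 1)) \<tau>1 \<tau>2) \<le> L * (t (i + 1) - t i) * (\<tau>2 - \<tau>1)"
        unfolding DD_transp by (simp add: mult_ac)
    qed
    then show ?thesis unfolding DD_transp .
  qed
  show ?thesis unfolding bmsdd_def
  proof (intro allI impI, elim conjE)
    fix s1 s2 t1 t2 assume ne: "s1 \<noteq> s2" "t1 \<noteq> t2"
      and g: "(s1, t1) \<in> grid s t" "(s1, t2) \<in> grid s t" "(s2, t1) \<in> grid s t" "(s2, t2) \<in> grid s t"
    have key: "infnorm (DD N s1 s2 t1 t2) \<le> L * \<bar>s2 - s1\<bar> * \<bar>t2 - t1\<bar>"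
    proof -
      have g': "(\<exists>i. a = s i) \<or> (\<exists>j. b = t j)" if "(a, b) \<in> grid s t" for a b
        using that unfolding grid_def by simp
      show ?thesis
      proof (cases "(\<exists>i. s1 = s i) \<and> (\<exists>i. s2 = s i)")
        case True
        then obtain i k where "s1 = s i" "s2 = s k" by blast
        then show ?thesis using V[where i=i and k=k and c=t1 and d=t2] by simp
      next
        case False
        then have "\<exists>j. t1 = t j" "\<exists>j. t2 = t j" using g'[OF g(1)] g'[OF g(2)] g'[OF g(3)] g'[OF g(4)] by blast+
        then obtain j k where "t1 = t j" "t2 = t k" by blast
        then show ?thesis using H[where j=j and k=k and c=s1 and d=s2] by (simp add: mult_ac)
      qed
    qed
    have pos: "\<bar>(s1 - s2) * (t1 - t2)\<bar> > 0" using ne by simp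
    have e: "\<bar>s2 - s1\<bar> * \<bar>t2 - t1\<bar> = \<bar>(s1 - s2) * (t1 - t2)\<bar>"
      by (simp add: abs_mult abs_minus_commute)
    have "\<bar>(s1 - s2) * (t1 - t2)\<bar> * infnorm (mdd N s1 s2 t1 t2) \<le> L * \<bar>(s1 - s2) * (t1 - t2)\<bar>"
      using key infnorm_DD[OF ne, of N] e by (metis mult.assoc)
    then show "infnorm (mdd N s1 s2 t1 t2) \<le> L" using pos by (simp add: mult.commute)
  qed
qed

end
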